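(* Let $(X,\mathcal{O})$ be a sober topological space and $P \subseteq X$ with subspace topology $\mathcal{O}|_P=\{U\cap P\mid U\in\mathcal{O}\}$. Let $j : \mathcal{O} \to \mathcal{O}$ be $j(U) = \bigcup\{V \in \mathcal{O} \mid V \cap P \subseteq U \cap P\}$ and $\widetilde{P} = \{U \in \mathcal{O} \mid j(U)=U\}$. For $x \in X$ let $\widetilde{x} = X \setminus \overline{\{x\}}$. Then the following are equivalent: (i) $(P,\mathcal{O}|_P)$ is sober; (ii) for every $x \in X$, $x \in P$ if and only if $\widetilde{x} \in \widetilde{P}$.
   Context: A point of a frame $L$ is a completely prime filter: an upward-closed subset containing the top, closed under binary meets, and such that if $\bigvee S$ belongs to it then some element of $S$ does. For a space $(X,\mathcal{O})$ and $x\in X$, $\mathcal{F}_x=\{U\in\mathcal{O}\mid x\in U\}$; the space is sober if every point of the frame $\mathcal{O}$ (ordered by inclusion) is $\mathcal{F}_x$ for a unique $x$. *)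

theory Defs
  imports "HOL-Analysis.Analysis"
begin

text \<open>Points of the frame of open sets of a topology: completely prime filters.\<close>
definition frame_point :: "'a topology \<Rightarrow> 'a set set \<Rightarrow> bool" where
  "frame_point T F \<longleftrightarrow>
     F \<subseteq> {U. openin T U} \<and>
     (\<forall>U V. U \<in> F \<and> openin T V \<and> U \<subseteq> V \<longrightarrow> V \<in> F) \<and>
     topspace T \<in> F \<and>
     (\<forall>U V. U \<in> F \<and> V \<in> F \<longrightarrow> U \<inter> V \<in> F) \<and>
     (\<forall>S. S \<subseteq> {U. openin T U} \<and> \<Union>S \<in> F \<longrightarrow> (\<exists>U\<in>S. U \<in> F))"

definition nbhd_filter :: "'a topology \<Rightarrow> 'a \<Rightarrow> 'a set set" where
  "nbhd_filter T x = {U. openin T U \<and> x \<in> U}"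

definition sober :: "'a topology \<Rightarrow> bool" where
  "sober T \<longleftrightarrow> (\<forall>F. frame_point T F \<longrightarrow> (\<exists>!x. x \<in> topspace T \<and> F = nbhd_filter T x))"

definition nucleus_j :: "'a topology \<Rightarrow> 'a set \<Rightarrow> 'a set \<Rightarrow> 'a set" where
  "nucleus_j T P U = \<Union>{V. openin T V \<and> V \<inter> P \<subseteq> U \<inter> P}"

definition Ptilde :: "'a topology \<Rightarrow> 'a set \<Rightarrow> 'a set set" where
  "Ptilde T P = {U. openin T U \<and> nucleus_j T P U = U}"

definition xtilde :: "'a topology \<Rightarrow> 'a \<Rightarrow> 'a set" where
  "xtilde T x = topspace T - T closure_of {x}"

end

theory Submission
  imports Defs
begin

lemma nbhd_point:
  assumes "x \<in> topspace X"
  shows "frame_point X (nbhd_filter X x)"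
  using assms unfolding frame_point_def nbhd_filter_def by auto

lemma sober_T0:
  assumes "sober X" "x \<in> topspace X" "y \<in> topspace X"
    and "\<And>U. openin X U \<Longrightarrow> (x \<in> U \<longleftrightarrow> y \<in> U)"
  shows "x = y"
proof -
  have e: "nbhd_filter X x = nbhd_filter X y"
    using assms(4) unfolding nbhd_filter_def by auto
  have "\<exists>!z. z \<in> topspace X \<and> nbhd_filter X x = nbhd_filter X z"
    using assms(1) nbhd_point[OF assms(2)] unfolding sober_def by blast
  then show ?thesis using e assms(2,3) by blast
qed

lemma open_cl_disj:
  assumes "openin X V"
  shows "V \<inter> X closure_of {x} = {} \<longleftrightarrow> x \<notin> V"
proof
  assume "V \<inter> X closure_of {x} = {}"
  then show "x \<notin> V"
    using assms closure_of_subset[of "{x}" X] openin_subset[OF assms] by auto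
next
  assume "x \<notin> V"
  then show "V \<inter> X closure_of {x} = {}"
    using assms by (auto simp: in_closure_of)
qed

lemma xtilde_char:
  assumes "x \<in> topspace X"
  shows "xtilde X x \<in> Ptilde X P \<longleftrightarrow>
     (\<forall>V. openin X V \<and> x \<in> V \<longrightarrow> V \<inter> P \<inter> X closure_of {x} \<noteq> {})"
proof -
  let ?t = "xtilde X x"
  have ot: "openin X ?t" unfolding xtilde_def by auto
  have sub: "?t \<subseteq> nucleus_j X P ?t" unfolding nucleus_j_def using ot by auto
  have "?t \<in> Ptilde X P \<longleftrightarrow> (\<forall>V. openin X V \<and> V \<inter> P \<subseteq> ?t \<inter> P \<longrightarrow> V \<subseteq> ?t)"
  proof
    assume "?t \<in> Ptilde X P"
    then have "nucleus_j X P ?t = ?t" unfolding Ptilde_def by auto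
    then show "\<forall>V. openin X V \<and> V \<inter> P \<subseteq> ?t \<inter> P \<longrightarrow> V \<subseteq> ?t"
      unfolding nucleus_j_def by blast
  next
    assume "\<forall>V. openin X V \<and> V \<inter> P \<subseteq> ?t \<inter> P \<longrightarrow> V \<subseteq> ?t"
    then have "nucleus_j X P ?t \<subseteq> ?t" unfolding nucleus_j_def by blast
    then show "?t \<in> Ptilde X P" using sub ot unfolding Ptilde_def by auto
  qed
  also have "\<dots> \<longleftrightarrow> (\<forall>V. openin X V \<and> V \<inter> P \<inter> X closure_of {x} = {} \<longrightarrow> x \<notin> V)"
  proof -
    have "(V \<inter> P \<subseteq> ?t \<inter> P \<longleftrightarrow> V \<inter> P \<inter> X closure_of {x} = {})" if "openin X V" for V
      using openin_subset[OF that] unfolding xtilde_def by auto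
    moreover have "(V \<subseteq> ?t \<longleftrightarrow> x \<notin> V)" if "openin X V" for V
      using open_cl_disj[OF that, of x] openin_subset[OF that] unfolding xtilde_def by auto
    ultimately show ?thesis by (smt (verit))
  qed
  finally show ?thesis by (smt (verit))
qed

theorem mainTheorem3:
  fixes X :: "'a topology" and P :: "'a set"
  assumes "sober X" and "P \<subseteq> topspace X"
  shows "sober (subtopology X P) \<longleftrightarrow>
         (\<forall>x\<in>topspace X. x \<in> P \<longleftrightarrow> xtilde X x \<in> Ptilde X P)"
proof -
  have tsP: "topspace (subtopology X P) = P" using assms(2) by auto
  have fwd: "xtilde X x \<in> Ptilde X P" if "x \<in> P" for x
  proof -
    have xt: "x \<in> topspace X" using that assms(2) by auto
    then have "x \<in> X closure_of {x}" using closure_of_subset[of "{x}" X] by auto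
    then show ?thesis using that xt xtilde_char[OF xt, of P] by blast
  qed
  show ?thesis
  proof
    assume sP: "sober (subtopology X P)"
    show "\<forall>x\<in>topspace X. x \<in> P \<longleftrightarrow> xtilde X x \<in> Ptilde X P"
    proof (intro ballI iffI)
      fix x assume x: "x \<in> topspace X" and xt: "xtilde X x \<in> Ptilde X P"
      have H: "\<And>V. openin X V \<Longrightarrow> x \<in> V \<Longrightarrow> V \<inter> P \<inter> X closure_of {x} \<noteq> {}"
        using xt xtilde_char[OF x] by blast
      define F where "F = {W. openin (subtopology X P) W \<and> W \<inter> X closure_of {x} \<noteq> {}}"
      have Fchar: "W \<in> F \<longleftrightarrow> (\<exists>U. openin X U \<and> x \<in> U \<and> W = U \<inter> P)" for W
      proof
        assume "W \<in> F"
        then obtain U where U: "openin X U" "W = U \<inter> P" and ne: "W \<inter> X closure_of {x} \<noteq> {}"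
          unfolding F_def openin_subtopology by auto
        then have "x \<in> U" using open_cl_disj[OF U(1)] by auto
        then show "\<exists>U. openin X U \<and> x \<in> U \<and> W = U \<inter> P" using U by blast
      next
        assume "\<exists>U. openin X U \<and> x \<in> U \<and> W = U \<inter> P"
        then obtain U where "openin X U" "x \<in> U" "W = U \<inter> P" by blast
        then show "W \<in> F" unfolding F_def openin_subtopology using H by blast
      qed
      have "frame_point (subtopology X P) F"
        unfolding frame_point_def
      proof (intro conjI allI impI)
        show "F \<subseteq> {U. openin (subtopology X P) U}" unfolding F_def by auto
      next
        fix U V assume "U \<in> F \<and> openin (subtopology X P) V \<and> U \<subseteq> V"
        then show "V \<in> F" unfolding F_def by auto
      next
        show "topspace (subtopology X P) \<in> F" unfolding tsP using Fchar[of P] x assms(2) by blast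
      next
        fix U V assume "U \<in> F \<and> V \<in> F"
        then show "U \<inter> V \<in> F" unfolding Fchar by (metis Int_assoc Int_left_commute Int_absorb IntI openin_Int)
      next
        fix S assume "S \<subseteq> {U. openin (subtopology X P) U} \<and> \<Union> S \<in> F"
        then show "\<exists>U\<in>S. U \<in> F" unfolding F_def by auto
      qed
      then obtain p where p: "p \<in> P" "F = nbhd_filter (subtopology X P) p"
        using sP tsP unfolding sober_def by auto
      have "x = p"
      proof (rule sober_T0[OF assms(1) x])
        show "p \<in> topspace X" using p assms(2) by auto
        fix U assume U: "openin X U"
        have "x \<in> U \<longleftrightarrow> U \<inter> P \<in> F"
        proof
          assume "x \<in> U" then show "U \<inter> P \<in> F" using Fchar[of "U \<inter> P"] U by blast
        next
          assume "U \<inter> P \<in> F"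
          then have "U \<inter> X closure_of {x} \<noteq> {}" unfolding F_def by blast
          then show "x \<in> U" using open_cl_disj[OF U, of x] by blast
        qed
        also have "\<dots> \<longleftrightarrow> p \<in> U" using p U unfolding nbhd_filter_def openin_subtopology by auto
        finally show "x \<in> U \<longleftrightarrow> p \<in> U" .
      qed
      then show "x \<in> P" using p by simp
    qed (use fwd in auto)
  next
    assume R: "\<forall>x\<in>topspace X. x \<in> P \<longleftrightarrow> xtilde X x \<in> Ptilde X P"
    show "sober (subtopology X P)"
      unfolding sober_def
    proof (intro allI impI)
      fix F assume F: "frame_point (subtopology X P) F"
      define G where "G = {U. openin X U \<and> U \<inter> P \<in> F}"
      have opF: "\<And>U. openin X U \<Longrightarrow> openin (subtopology X P) (U \<inter> P)"
        unfolding openin_subtopology by auto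
      have "frame_point X G"
        unfolding frame_point_def
      proof (intro conjI allI impI)
        show "G \<subseteq> {U. openin X U}" unfolding G_def by auto
      next
        fix U V assume "U \<in> G \<and> openin X V \<and> U \<subseteq> V"
        then show "V \<in> G" using F opF unfolding G_def frame_point_def
          by (metis (no_types, lifting) Int_mono mem_Collect_eq order_refl)
      next
        show "topspace X \<in> G" using F tsP assms(2) unfolding G_def frame_point_def
          by (metis inf.absorb_iff2 mem_Collect_eq openin_topspace)
      next
        fix U V assume "U \<in> G \<and> V \<in> G"
        then have "(U \<inter> P) \<inter> (V \<inter> P) \<in> F" "openin X U" "openin X V"
          using F unfolding G_def frame_point_def by auto
        moreover have "(U \<inter> P) \<inter> (V \<inter> P) = (U \<inter> V) \<inter> P" by blast
        ultimately show "U \<inter> V \<in> G" unfolding G_def by auto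
      next
        fix S assume S: "S \<subseteq> {U. openin X U} \<and> \<Union> S \<in> G"
        have "\<Union>((\<lambda>U. U \<inter> P) ` S) = \<Union>S \<inter> P" by auto
        then have "\<Union>((\<lambda>U. U \<inter> P) ` S) \<in> F" using S unfolding G_def by auto
        moreover have "(\<lambda>U. U \<inter> P) ` S \<subseteq> {U. openin (subtopology X P) U}" using S opF by auto
        ultimately obtain W where "W \<in> (\<lambda>U. U \<inter> P) ` S" "W \<in> F"
          using F unfolding frame_point_def by metis
        then show "\<exists>U\<in>S. U \<in> G" using S unfolding G_def by auto
      qed
      then obtain x where x: "x \<in> topspace X" "G = nbhd_filter X x"
        using assms(1) unfolding sober_def by blast
      have Gx: "\<And>U. openin X U \<Longrightarrow> (U \<inter> P \<in> F \<longleftrightarrow> x \<in> U)"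
        using x unfolding G_def nbhd_filter_def by blast
      have xP: "x \<in> P"
      proof -
        have "\<forall>V. openin X V \<and> x \<in> V \<longrightarrow> V \<inter> P \<inter> X closure_of {x} \<noteq> {}"
        proof (intro allI impI notI)
          fix V assume V: "openin X V \<and> x \<in> V" and e: "V \<inter> P \<inter> X closure_of {x} = {}"
          have VF: "V \<inter> P \<in> F" using Gx V by auto
          have ot: "openin X (xtilde X x)" unfolding xtilde_def by auto
          have "V \<inter> P \<subseteq> xtilde X x \<inter> P" using e V openin_subset unfolding xtilde_def by blast
          then have "xtilde X x \<inter> P \<in> F" using F VF opF[OF ot] unfolding frame_point_def by blast
          then have "x \<in> xtilde X x" using Gx ot by blast
          moreover have "x \<in> X closure_of {x}" using closure_of_subset[of "{x}" X] x(1) by auto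
          ultimately show False unfolding xtilde_def by blast
        qed
        then show ?thesis using R x(1) xtilde_char[OF x(1)] by blast
      qed
      have FN: "F = nbhd_filter (subtopology X P) x"
      proof
        show "F \<subseteq> nbhd_filter (subtopology X P) x"
        proof
          fix W assume "W \<in> F"
          moreover then obtain U where "openin X U" "W = U \<inter> P"
            using F unfolding frame_point_def openin_subtopology by blast
          ultimately show "W \<in> nbhd_filter (subtopology X P) x"
            using Gx xP opF unfolding nbhd_filter_def by blast
        qed
      next
        show "nbhd_filter (subtopology X P) x \<subseteq> F"
          using Gx xP unfolding nbhd_filter_def openin_subtopology by blast
      qed
      show "\<exists>!x. x \<in> topspace (subtopology X P) \<and> F = nbhd_filter (subtopology X P) x"
      proof (rule ex1I[of _ x])
        show "x \<in> topspace (subtopology X P) \<and> F = nbhd_filter (subtopology X P) x"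
          using xP tsP FN by simp
      next
        fix y assume y: "y \<in> topspace (subtopology X P) \<and> F = nbhd_filter (subtopology X P) y"
        show "y = x"
        proof (rule sober_T0[OF assms(1)])
          show "y \<in> topspace X" "x \<in> topspace X" using y tsP assms(2) x by auto
          fix U assume U: "openin X U"
          have "U \<inter> P \<in> F \<longleftrightarrow> y \<in> U" using y U opF tsP unfolding nbhd_filter_def by auto
          then show "y \<in> U \<longleftrightarrow> x \<in> U" using Gx U by blast
        qed
      qed
    qed
  qed
qed

end
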